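(* The dimension of the vector space $\mathcal{D}\cap (I_{\mathcal{C}})_2$ is $d-3$.
   Context: Let $P_d$ be a convex polygon with $d\ge 4$ vertices $v_1,\dots,v_d$ (indices mod $d$) over a field $\mathbb{K}$ with no three edge lines concurrent, and ${\bf v}_i=(v_i,1)\in\mathbb{K}^3$. In $S=\mathbb{K}[x_1,\ldots,x_d]$ let $\tau=\sum_i x_i{\bf v}_i=(\tau_1,\tau_2,\tau_3)$, $\mathcal{C}=\mathbb{V}(\tau_1,\tau_2,\tau_3)$ with ideal $I_{\mathcal{C}}=\langle\tau_1,\tau_2,\tau_3\rangle$, and $\mathcal{D}\subseteq S_2$ the span of diagonal monomials $x_ix_j$, $j\notin\{i-1,i,i+1\}$. *)

theory Defs
  imports "HOL-Analysis.Analysis" "HOL-Library.Function_Algebras"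
begin

(* Polygon with d vertices v 0, ..., v (d-1) in K^2 (indices mod d).  A linear form is a coefficient function
   nat => 'a (coefficient of x_i), a quadratic form is a coefficient function
   nat * nat => 'a, where (i,j) with i <= j stands for the monomial x_i x_j. *)

definition cross2 :: "'a::linordered_field \<times> 'a \<Rightarrow> 'a \<times> 'a \<Rightarrow> 'a" where
  "cross2 p q = fst p * snd q - snd p * fst q"

definition convex_polygon :: "nat \<Rightarrow> (nat \<Rightarrow> 'a::linordered_field \<times> 'a) \<Rightarrow> bool" where
  "convex_polygon d v \<longleftrightarrow> d \<ge> 3 \<and>
     ((\<forall>i<d. \<forall>k<d. k \<noteq> i \<and> k \<noteq> (i+1) mod d \<longrightarrow>
         cross2 (v ((i+1) mod d) - v i) (v k - v i) > 0) \<or>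
      (\<forall>i<d. \<forall>k<d. k \<noteq> i \<and> k \<noteq> (i+1) mod d \<longrightarrow>
         cross2 (v ((i+1) mod d) - v i) (v k - v i) < 0))"

definition on_edge_line :: "nat \<Rightarrow> (nat \<Rightarrow> 'a::linordered_field \<times> 'a) \<Rightarrow> nat \<Rightarrow> 'a \<times> 'a \<Rightarrow> bool" where
  "on_edge_line d v i p \<longleftrightarrow> cross2 (v ((i+1) mod d) - v i) (p - v i) = 0"

definition no_three_edge_lines_concurrent :: "nat \<Rightarrow> (nat \<Rightarrow> 'a::linordered_field \<times> 'a) \<Rightarrow> bool" where
  "no_three_edge_lines_concurrent d v \<longleftrightarrow>
     (\<forall>i<d. \<forall>j<d. \<forall>k<d. i \<noteq> j \<and> i \<noteq> k \<and> j \<noteq> k \<longrightarrow>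
        \<not> (\<exists>p. on_edge_line d v i p \<and> on_edge_line d v j p \<and> on_edge_line d v k p))"

definition lin_forms :: "nat \<Rightarrow> (nat \<Rightarrow> 'a::field) set" where
  "lin_forms d = {l. \<forall>i. i \<ge> d \<longrightarrow> l i = 0}"

definition lin_mult :: "(nat \<Rightarrow> 'a::field) \<Rightarrow> (nat \<Rightarrow> 'a) \<Rightarrow> nat \<times> nat \<Rightarrow> 'a" where
  "lin_mult l m = (\<lambda>(i,j). if i < j then l i * m j + l j * m i
                           else if i = j then l i * m i else 0)"

(* tau = sum_i x_i (v_i, 1) *)
definition tau1 :: "nat \<Rightarrow> (nat \<Rightarrow> 'a::linordered_field \<times> 'a) \<Rightarrow> nat \<Rightarrow> 'a" where
  "tau1 d v = (\<lambda>i. if i < d then fst (v i) else 0)"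
definition tau2 :: "nat \<Rightarrow> (nat \<Rightarrow> 'a::linordered_field \<times> 'a) \<Rightarrow> nat \<Rightarrow> 'a" where
  "tau2 d v = (\<lambda>i. if i < d then snd (v i) else 0)"
definition tau3 :: "nat \<Rightarrow> nat \<Rightarrow> 'a::linordered_field" where
  "tau3 d = (\<lambda>i. if i < d then 1 else 0)"

(* degree-2 part of the ideal I_C = <tau1, tau2, tau3> *)
definition IC2 :: "nat \<Rightarrow> (nat \<Rightarrow> 'a::linordered_field \<times> 'a) \<Rightarrow> (nat \<times> nat \<Rightarrow> 'a) set" where
  "IC2 d v = {q. \<exists>l1 \<in> lin_forms d. \<exists>l2 \<in> lin_forms d. \<exists>l3 \<in> lin_forms d.
      q = lin_mult l1 (tau1 d v) + lin_mult l2 (tau2 d v) + lin_mult l3 (tau3 d)}"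

(* x_i x_j (i < j) is a diagonal monomial iff j is not i-1, i, i+1 mod d *)
definition diag_pair :: "nat \<Rightarrow> nat \<times> nat \<Rightarrow> bool" where
  "diag_pair d ij \<longleftrightarrow> (case ij of (i,j) \<Rightarrow>
      i < j \<and> j < d \<and> j \<noteq> i + 1 \<and> \<not> (i = 0 \<and> j = d - 1))"

definition Dspace :: "nat \<Rightarrow> (nat \<times> nat \<Rightarrow> 'a::field) set" where
  "Dspace d = {q. \<forall>ij. \<not> diag_pair d ij \<longrightarrow> q ij = 0}"

definition fscale :: "'a::field \<Rightarrow> ('b \<Rightarrow> 'a) \<Rightarrow> 'b \<Rightarrow> 'a" where
  "fscale c f = (\<lambda>x. c * f x)"

lemma vector_space_fscale: "vector_space (fscale :: 'a::field \<Rightarrow> ('b \<Rightarrow> 'a) \<Rightarrow> _)"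
  by unfold_locales (auto simp: fscale_def algebra_simps fun_eq_iff)

end

theory Submission
  imports Defs
begin

lemma fun_sum_at: "(sum f A) x = sum (\<lambda>a. f a x) A"
  by (induction A rule: infinite_finite_induct) auto

lemma telescope_int:
  fixes g :: "nat \<Rightarrow> 'a::ab_group_add"
  shows "i \<le> j \<Longrightarrow> (\<Sum>m=i..<j. g m - g (Suc m)) = g i - g j"
proof (induction j)
  case 0 then show ?case by simp
next
  case (Suc j)
  show ?case
  proof (cases "i = Suc j")
    case True then show ?thesis by simp
  next
    case False
    then have "i \<le> j" using Suc.prems by simp
    then show ?thesis using Suc.IH by (simp add: sum.atLeastLessThan_Suc)
  qed
qed

lemma telescope_cyc:
  fixes g :: "nat \<Rightarrow> 'a::ab_group_add"
  assumes "d > 0"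
  shows "(\<Sum>k<d. g k - g (Suc k mod d)) = 0"
proof -
  obtain n where n: "d = Suc n" using assms by (cases d) auto
  have "(\<Sum>k<d. g k - g (Suc k mod d)) = (\<Sum>k<n. g k - g (Suc k mod d)) + (g n - g 0)"
    by (simp add: n)
  also have "(\<Sum>k<n. g k - g (Suc k mod d)) = (\<Sum>k<n. g k - g (Suc k))"
    by (rule sum.cong) (auto simp: n)
  also have "\<dots> = g 0 - g n" by (rule sum_lessThan_telescope')
  finally show ?thesis by simp
qed

definition e1 :: "nat \<Rightarrow> (nat \<Rightarrow> 'a::linordered_field \<times> 'a) \<Rightarrow> nat \<Rightarrow> 'a" where
  "e1 d v k = fst (v (Suc k mod d)) - fst (v k)"
definition e2 :: "nat \<Rightarrow> (nat \<Rightarrow> 'a::linordered_field \<times> 'a) \<Rightarrow> nat \<Rightarrow> 'a" where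
  "e2 d v k = snd (v (Suc k mod d)) - snd (v k)"
definition GG :: "nat \<Rightarrow> (nat \<Rightarrow> 'a::linordered_field \<times> 'a) \<Rightarrow> nat \<Rightarrow> nat \<Rightarrow> nat \<Rightarrow> 'a" where
  "GG d v i j m = e1 d v m * (snd (v j) - snd (v i)) - e2 d v m * (fst (v j) - fst (v i))"
definition Phi :: "nat \<Rightarrow> (nat \<Rightarrow> 'a::linordered_field \<times> 'a) \<Rightarrow> (nat \<Rightarrow> 'a) \<Rightarrow> nat \<times> nat \<Rightarrow> 'a" where
  "Phi d v t = (\<lambda>(i,j). if diag_pair d (i,j) then (\<Sum>m=i..<j. t m * GG d v i j m) else 0)"
definition inT :: "nat \<Rightarrow> (nat \<Rightarrow> 'a::linordered_field \<times> 'a) \<Rightarrow> (nat \<Rightarrow> 'a) \<Rightarrow> bool" where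
  "inT d v t \<longleftrightarrow> (\<Sum>k<d. t k * e1 d v k) = 0 \<and> (\<Sum>k<d. t k * e2 d v k) = 0"

lemma conv_ne:
  assumes "convex_polygon d v" "i < d" "k < d" "k \<noteq> i" "k \<noteq> Suc i mod d"
  shows "cross2 (v (Suc i mod d) - v i) (v k - v i) \<noteq> 0"
  using assms unfolding convex_polygon_def by (metis Suc_eq_plus1 less_irrefl)

lemma sum_e1_int: "i \<le> j \<Longrightarrow> j < d \<Longrightarrow> (\<Sum>m=i..<j. e1 d v m) = fst (v j) - fst (v i)"
proof -
  assume a: "i \<le> j" "j < d"
  have "(\<Sum>m=i..<j. e1 d v m) = (\<Sum>m=i..<j. (- fst (v m)) - (- fst (v (Suc m))))"
    by (rule sum.cong) (use a in \<open>auto simp: e1_def\<close>)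
  also have "\<dots> = fst (v j) - fst (v i)" using a by (subst telescope_int) auto
  finally show ?thesis .
qed

lemma sum_e2_int: "i \<le> j \<Longrightarrow> j < d \<Longrightarrow> (\<Sum>m=i..<j. e2 d v m) = snd (v j) - snd (v i)"
proof -
  assume a: "i \<le> j" "j < d"
  have "(\<Sum>m=i..<j. e2 d v m) = (\<Sum>m=i..<j. (- snd (v m)) - (- snd (v (Suc m))))"
    by (rule sum.cong) (use a in \<open>auto simp: e2_def\<close>)
  also have "\<dots> = snd (v j) - snd (v i)" using a by (subst telescope_int) auto
  finally show ?thesis .
qed

lemma inT_const: "d > 0 \<Longrightarrow> inT d v (\<lambda>_. c)"
proof -
  assume d: "d > 0"
  have "(\<Sum>k<d. e1 d v k) = 0" unfolding e1_def
    using telescope_cyc[OF d, of "\<lambda>k. - fst (v k)"] by simp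
  moreover have "(\<Sum>k<d. e2 d v k) = 0" unfolding e2_def
    using telescope_cyc[OF d, of "\<lambda>k. - snd (v k)"] by simp
  ultimately show ?thesis unfolding inT_def by (simp add: sum_distrib_left[symmetric])
qed

lemma Phi_lin:
  "Phi d v (\<lambda>m. \<Sum>k\<in>K. c k * b k m) = (\<Sum>k\<in>K. fscale (c k) (Phi d v (b k)))"
  by (rule ext) (auto simp: Phi_def fun_sum_at fscale_def sum_distrib_left sum_distrib_right
      mult.assoc intro: sum.swap)

lemma Phi_diff:
  "Phi d v (\<lambda>m. t m - s m) = (\<lambda>p. Phi d v t p - Phi d v s p)"
  by (rule ext) (auto simp: Phi_def left_diff_distrib sum_subtractf)

lemma Phi_cong: "(\<And>m. m < d \<Longrightarrow> t m = s m) \<Longrightarrow> Phi d v t = Phi d v s"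
  by (rule ext) (auto simp: Phi_def diag_pair_def intro!: sum.cong)

lemma Phi_shift: "Phi d v (\<lambda>m. t m - c) = Phi d v t"
proof (rule ext, clarify)
  fix i j
  show "Phi d v (\<lambda>m. t m - c) (i, j) = Phi d v t (i, j)"
  proof (cases "diag_pair d (i,j)")
    case True
    then have ij: "i \<le> j" "j < d" by (auto simp: diag_pair_def)
    have "(\<Sum>m=i..<j. GG d v i j m) = (\<Sum>m=i..<j. e1 d v m) * (snd (v j) - snd (v i))
       - (\<Sum>m=i..<j. e2 d v m) * (fst (v j) - fst (v i))"
      unfolding GG_def by (simp add: sum_subtractf sum_distrib_right)
    also have "\<dots> = 0" using sum_e1_int[where v=v, OF ij] sum_e2_int[where v=v, OF ij] by (simp add: mult.commute)
    finally have "(\<Sum>m=i..<j. GG d v i j m) = 0" .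
    then show ?thesis using True
      by (simp add: Phi_def left_diff_distrib sum_subtractf sum_distrib_left[symmetric])
  qed (simp add: Phi_def)
qed

lemma sum_split_lt: "(i::nat) \<le> j \<Longrightarrow> sum f {..<j} = sum f {..<i} + sum f {i..<j}"
  using sum.atLeastLessThan_concat[of 0 i j f] by (simp add: lessThan_atLeast0)

lemma sum_tG: "(\<Sum>m=i..<j. t m * GG d v i j m) =
   (\<Sum>m=i..<j. t m * e1 d v m) * (snd (v j) - snd (v i))
   - (\<Sum>m=i..<j. t m * e2 d v m) * (fst (v j) - fst (v i))"
proof -
  have "(\<Sum>m=i..<j. t m * GG d v i j m) = (\<Sum>m=i..<j. t m * e1 d v m * (snd (v j) - snd (v i))
     - t m * e2 d v m * (fst (v j) - fst (v i)))"
    by (rule sum.cong) (auto simp: GG_def algebra_simps)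
  then show ?thesis by (simp add: sum_subtractf sum_distrib_right)
qed

lemma nondiag_zero:
  assumes "inT d v t" "i < j" "j < d" "\<not> diag_pair d (i,j)"
  shows "(\<Sum>m=i..<j. t m * GG d v i j m) = 0"
proof -
  from assms have "j = Suc i \<or> (i = 0 \<and> j = d - 1)" by (auto simp: diag_pair_def)
  then show ?thesis
  proof
    assume j: "j = Suc i"
    then show ?thesis using assms by (simp add: GG_def e1_def e2_def)
  next
    assume ij: "i = 0 \<and> j = d - 1"
    then have d: "d = Suc j" using assms by simp
    have a: "(\<Sum>m<j. t m * e1 d v m) = - (t j * e1 d v j)"
      using assms(1) unfolding inT_def d by (simp add: eq_neg_iff_add_eq_0)
    have b: "(\<Sum>m<j. t m * e2 d v m) = - (t j * e2 d v j)"
      using assms(1) unfolding inT_def d by (simp add: eq_neg_iff_add_eq_0)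
    have "(\<Sum>m=i..<j. t m * GG d v i j m) = (\<Sum>m<j. t m * e1 d v m) * (snd (v j) - snd (v 0))
      - (\<Sum>m<j. t m * e2 d v m) * (fst (v j) - fst (v 0))"
      unfolding sum_tG using ij by (simp add: lessThan_atLeast0)
    also have "\<dots> = 0" unfolding a b by (simp add: e1_def e2_def d algebra_simps)
    finally show ?thesis .
  qed
qed

lemma Phi_IC2:
  assumes "inT d v t"
  shows "Phi d v t \<in> IC2 d v"
proof -
  define P1 where "P1 j = (\<Sum>k<j. t k * e1 d v k)" for j
  define P2 where "P2 j = (\<Sum>k<j. t k * e2 d v k)" for j
  define l1 where "l1 j = (if j < d then P2 j else 0)" for j
  define l2 where "l2 j = (if j < d then - P1 j else 0)" for j
  define l3 where "l3 j = (if j < d then - (P2 j * fst (v j) - P1 j * snd (v j)) else 0)" for j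
  have L: "l1 \<in> lin_forms d" "l2 \<in> lin_forms d" "l3 \<in> lin_forms d"
    by (auto simp: lin_forms_def l1_def l2_def l3_def)
  have "Phi d v t = lin_mult l1 (tau1 d v) + lin_mult l2 (tau2 d v) + lin_mult l3 (tau3 d)"
  proof (rule ext, clarify)
    fix i j
    show "Phi d v t (i,j) = (lin_mult l1 (tau1 d v) + lin_mult l2 (tau2 d v) + lin_mult l3 (tau3 d)) (i,j)"
    proof (cases "i < j \<and> j < d")
      case True
      then have ij: "i \<le> j" "i < d" "j < d" by auto
      have "(lin_mult l1 (tau1 d v) + lin_mult l2 (tau2 d v) + lin_mult l3 (tau3 d)) (i,j)
          = (P2 i - P2 j) * (fst (v j) - fst (v i)) - (P1 i - P1 j) * (snd (v j) - snd (v i))"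
        using True by (simp add: lin_mult_def l1_def l2_def l3_def tau1_def tau2_def tau3_def algebra_simps)
      also have "\<dots> = (\<Sum>m=i..<j. t m * GG d v i j m)"
      proof -
        have "P1 j = P1 i + (\<Sum>m=i..<j. t m * e1 d v m)" "P2 j = P2 i + (\<Sum>m=i..<j. t m * e2 d v m)"
          unfolding P1_def P2_def by (rule sum_split_lt[OF ij(1)])+
        then show ?thesis unfolding sum_tG by (simp add: algebra_simps)
      qed
      finally have *: "(lin_mult l1 (tau1 d v) + lin_mult l2 (tau2 d v) + lin_mult l3 (tau3 d)) (i,j)
          = (\<Sum>m=i..<j. t m * GG d v i j m)" .
      show ?thesis
      proof (cases "diag_pair d (i,j)")
        case True then show ?thesis using * by (simp add: Phi_def)
      next
        case False then show ?thesis using * nondiag_zero[OF assms] \<open>i<j \<and> j<d\<close>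
          by (simp add: Phi_def)
      qed
    next
      case False
      then have "\<not> diag_pair d (i,j)" by (auto simp: diag_pair_def)
      then show ?thesis using False
        by (auto simp: Phi_def lin_mult_def l1_def l2_def l3_def tau1_def tau2_def tau3_def algebra_simps)
    qed
  qed
  then show ?thesis using L unfolding IC2_def by blast
qed

lemma e_nz:
  assumes "convex_polygon d v" "k < d"
  shows "e1 d v k \<noteq> 0 \<or> e2 d v k \<noteq> 0"
proof -
  have d3: "d \<ge> 3" using assms(1) by (simp add: convex_polygon_def)
  obtain m where m: "m < d" "m \<noteq> k" "m \<noteq> Suc k mod d"
  proof (cases "k = 0")
    case True then show ?thesis using that[of 2] d3 by auto
  next
    case False
    show ?thesis
    proof (cases "Suc k mod d = 0")
      case True
      have "Suc k = d" using True assms(2) by (metis Suc_lessI mod_less nat.distinct(1))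
      then show ?thesis using that[of 1] d3 False by auto
    next
      case False2: False
      show ?thesis using that[of 0] d3 False False2 by auto
    qed
  qed
  from conv_ne[OF assms(1) assms(2) m] show ?thesis
    by (auto simp: cross2_def e1_def e2_def)
qed

lemma Phi_surj:
  assumes conv: "convex_polygon d v" and q: "q \<in> Dspace d \<inter> IC2 d v"
  shows "\<exists>t. inT d v t \<and> q = Phi d v t"
proof -
  have d3: "d \<ge> 3" using conv by (simp add: convex_polygon_def)
  from q obtain l1 l2 l3 where L: "l1 \<in> lin_forms d" "l2 \<in> lin_forms d" "l3 \<in> lin_forms d"
    and qeq: "q = lin_mult l1 (tau1 d v) + lin_mult l2 (tau2 d v) + lin_mult l3 (tau3 d)"
    unfolding IC2_def by blast
  have qD: "\<And>ij. \<not> diag_pair d ij \<Longrightarrow> q ij = 0" using q by (auto simp: Dspace_def)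
  have qii: "l3 i = - (l1 i * fst (v i) + l2 i * snd (v i))" if "i < d" for i
  proof -
    have "q (i,i) = 0" by (rule qD) (simp add: diag_pair_def)
    then show ?thesis using that by (simp add: qeq lin_mult_def tau1_def tau2_def tau3_def algebra_simps)
  qed
  have qij: "q (i,j) = (l1 i - l1 j) * (fst (v j) - fst (v i)) + (l2 i - l2 j) * (snd (v j) - snd (v i))"
    if "i < j" "j < d" for i j
    using that qii[of i] qii[of j] by (simp add: qeq lin_mult_def tau1_def tau2_def tau3_def algebra_simps)
  define D1 where "D1 k = l1 k - l1 (Suc k mod d)" for k
  define D2 where "D2 k = l2 k - l2 (Suc k mod d)" for k
  have orth: "D1 k * e1 d v k + D2 k * e2 d v k = 0" if "k < d" for k
  proof (cases "Suc k < d")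
    case True
    have "q (k, Suc k) = 0" by (rule qD) (simp add: diag_pair_def)
    then show ?thesis using qij[of k "Suc k"] True by (simp add: D1_def D2_def e1_def e2_def)
  next
    case False
    then have sk: "Suc k = d" using that by simp
    then have k: "k = d - 1" "Suc k mod d = 0" by auto
    have "q (0, d-1) = 0" by (rule qD) (simp add: diag_pair_def)
    then show ?thesis using qij[of 0 "d-1"] d3 k
      by (simp add: D1_def D2_def e1_def e2_def algebra_simps)
  qed
  define t where "t k = (if e1 d v k \<noteq> 0 then D2 k / e1 d v k else - D1 k / e2 d v k)" for k
  have Dt: "D1 k = - (t k * e2 d v k) \<and> D2 k = t k * e1 d v k" if "k < d" for k
  proof (cases "e1 d v k \<noteq> 0")
    case True
    then show ?thesis using orth[OF that] by (simp add: t_def field_simps)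
  next
    case False
    then have "e2 d v k \<noteq> 0" using e_nz[OF conv that] by simp
    then show ?thesis using orth[OF that] False by (simp add: t_def field_simps)
  qed
  have "inT d v t"
  proof -
    have "(\<Sum>k<d. t k * e1 d v k) = (\<Sum>k<d. l2 k - l2 (Suc k mod d))"
      by (rule sum.cong) (auto simp: Dt D2_def[symmetric])
    moreover have "(\<Sum>k<d. t k * e2 d v k) = - (\<Sum>k<d. l1 k - l1 (Suc k mod d))"
      by (simp add: sum_negf[symmetric], rule sum.cong) (auto simp: D1_def dest: Dt)
    moreover have "d > 0" using d3 by simp
    ultimately show ?thesis using telescope_cyc[of d l1] telescope_cyc[of d l2] unfolding inT_def by simp
  qed
  moreover have "q = Phi d v t"
  proof (rule ext, clarify)
    fix i j
    show "q (i,j) = Phi d v t (i,j)"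
    proof (cases "diag_pair d (i,j)")
      case True
      then have ij: "i < j" "j < d" by (auto simp: diag_pair_def)
      have a: "l1 i - l1 j = - (\<Sum>m=i..<j. t m * e2 d v m)"
      proof -
        have "(\<Sum>m=i..<j. t m * e2 d v m) = (\<Sum>m=i..<j. - (l1 m - l1 (Suc m)))"
        proof (rule sum.cong)
          fix x assume "x \<in> {i..<j}"
          then have "x < d" "Suc x < d" using ij by auto
          then show "t x * e2 d v x = - (l1 x - l1 (Suc x))" using Dt[of x] by (simp add: D1_def)
        qed simp
        also have "\<dots> = - (\<Sum>m=i..<j. l1 m - l1 (Suc m))" by (rule sum_negf)
        finally show ?thesis using telescope_int[of i j l1] ij by simp
      qed
      have b: "l2 i - l2 j = (\<Sum>m=i..<j. t m * e1 d v m)"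
      proof -
        have "(\<Sum>m=i..<j. t m * e1 d v m) = (\<Sum>m=i..<j. l2 m - l2 (Suc m))"
        proof (rule sum.cong)
          fix x assume "x \<in> {i..<j}"
          then have "x < d" "Suc x < d" using ij by auto
          then show "t x * e1 d v x = l2 x - l2 (Suc x)" using Dt[of x] by (simp add: D2_def)
        qed simp
        then show ?thesis using telescope_int[of i j l2] ij by simp
      qed
      show ?thesis using True unfolding qij[OF ij] a b
        by (simp add: Phi_def sum_tG algebra_simps)
    next
      case False
      then show ?thesis using qD by (simp add: Phi_def)
    qed
  qed
  ultimately show ?thesis by blast
qed

lemma Phi_zero_const:
  assumes conv: "convex_polygon d v" and d4: "d \<ge> 4" and z: "Phi d v s = (\<lambda>_. 0)"
  shows "m \<le> d - 2 \<Longrightarrow> s m = s 0"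
proof -
  have step: "s k = s (Suc k)" if "Suc (Suc k) < d" for k
  proof -
    have dp: "diag_pair d (k, Suc (Suc k))" using that d4 by (auto simp: diag_pair_def)
    have ne: "cross2 (v (Suc k mod d) - v k) (v (Suc (Suc k)) - v k) \<noteq> 0"
      by (rule conv_ne[OF conv]) (use that in auto)
    have "Phi d v s (k, Suc (Suc k)) = 0" using z by simp
    then have "(s k - s (Suc k)) * cross2 (v (Suc k) - v k) (v (Suc (Suc k)) - v k) = 0"
      using dp that by (simp add: Phi_def GG_def e1_def e2_def cross2_def algebra_simps)
    then show ?thesis using ne that by simp
  qed
  show "m \<le> d - 2 \<Longrightarrow> s m = s 0"
  proof (induction m)
    case (Suc m)
    then show ?case using step[of m] by simp
  qed simp
qed

definition Del :: "nat \<Rightarrow> (nat \<Rightarrow> 'a::linordered_field \<times> 'a) \<Rightarrow> 'a" where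
  "Del d v = e1 d v (d-2) * e2 d v (d-1) - e2 d v (d-2) * e1 d v (d-1)"

definition bb :: "nat \<Rightarrow> (nat \<Rightarrow> 'a::linordered_field \<times> 'a) \<Rightarrow> nat \<Rightarrow> nat \<Rightarrow> 'a" where
  "bb d v k m = (if m = k then 1 else 0)
     + (if m = d - 2 then - (e1 d v k * e2 d v (d-1) - e2 d v k * e1 d v (d-1)) / Del d v else 0)
     + (if m = d - 1 then - (e1 d v (d-2) * e2 d v k - e2 d v (d-2) * e1 d v k) / Del d v else 0)"

lemma Del_nz: assumes conv: "convex_polygon d v" and d4: "d \<ge> 4" shows "Del d v \<noteq> 0"
proof -
  have "cross2 (v (Suc (d-2) mod d) - v (d-2)) (v 0 - v (d-2)) \<noteq> 0"
    by (rule conv_ne[OF conv]) (use d4 in auto)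
  moreover have "Suc (d-2) = d - 1" "Suc (d-1) = d" using d4 by auto
  ultimately show ?thesis by (simp add: Del_def cross2_def e1_def e2_def algebra_simps)
qed

lemma sum_lt_last2:
  fixes d :: nat
  assumes "d \<ge> 2" "\<And>m. m < d - 2 \<Longrightarrow> f m = 0"
  shows "(\<Sum>m<d. f m) = f (d-2) + f (d-1)"
proof -
  obtain n where n: "d = Suc (Suc n)" using assms(1) by (metis add_2_eq_Suc le_Suc_ex)
  have "(\<Sum>m<n. f m) = 0" using assms(2) by (simp add: n)
  then show ?thesis by (simp add: n)
qed

lemma bb_inT:
  assumes conv: "convex_polygon d v" and d4: "d \<ge> 4" and k: "k < d - 2"
  shows "inT d v (bb d v k)"
proof -
  have D: "Del d v \<noteq> 0" by (rule Del_nz[OF conv d4])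
  have kn: "k \<noteq> d - 2" "k \<noteq> d - 1" "d - 2 \<noteq> d - 1" "k < d" "d - 2 < d" "d - 1 < d" using k d4 by auto
  have S: "(\<Sum>m<d. bb d v k m * g m) = g k
     + - (e1 d v k * e2 d v (d-1) - e2 d v k * e1 d v (d-1)) / Del d v * g (d-2)
     + - (e1 d v (d-2) * e2 d v k - e2 d v (d-2) * e1 d v k) / Del d v * g (d-1)" for g
    unfolding bb_def using kn
    by (simp add: distrib_right sum.distrib if_distrib[of "\<lambda>x. x * _"] sum.delta cong: if_cong)
  show ?thesis unfolding inT_def S using D
    by (simp add: field_simps Del_def)
qed

lemma bb_low: "m < d - 2 \<Longrightarrow> bb d v k m = (if m = k then 1 else 0)"
proof -
  assume m: "m < d - 2"
  then have "m \<noteq> d - 2" "m \<noteq> d - 1" by auto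
  then show ?thesis by (simp add: bb_def)
qed

lemma comb_low:
  "finite K \<Longrightarrow> m < d - 2 \<Longrightarrow> (\<Sum>k\<in>K. c k * bb d v k m) = (if m \<in> K then c m else 0)" for K :: "nat set"
proof -
  assume m: "m < d - 2" and fK: "finite K"
  have "(\<Sum>k\<in>K. c k * bb d v k m) = (\<Sum>k\<in>K. if m = k then c k else 0)"
    by (rule sum.cong) (auto simp: bb_low[OF m])
  also have "\<dots> = (if m \<in> K then c m else 0)"
    using fK by (simp add: sum.delta)
  finally show ?thesis .
qed

lemma indep_key:
  assumes conv: "convex_polygon d v" and d4: "d \<ge> 4"
    and z: "Phi d v (\<lambda>m. \<Sum>k\<in>{1..d-3}. c k * bb d v k m) = (\<lambda>_. 0)"
    and k: "k \<in> {1..d-3}"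
  shows "c k = 0"
proof -
  let ?s = "\<lambda>m. \<Sum>k\<in>{1..d-3}. c k * bb d v k m"
  have "?s k = ?s 0" by (rule Phi_zero_const[OF conv d4 z]) (use k in auto)
  moreover have "?s k = c k" using k d4 by (subst comb_low) auto
  moreover have "?s 0 = 0" using d4 by (subst comb_low) auto
  ultimately show ?thesis by simp
qed

lemma inj_bb:
  assumes conv: "convex_polygon d v" and d4: "d \<ge> 4"
  shows "inj_on (\<lambda>k. Phi d v (bb d v k)) {1..d-3}"
proof (rule inj_onI, rule ccontr)
  fix k m assume k: "k \<in> {1..d-3}" and m: "m \<in> {1..d-3}" and eq: "Phi d v (bb d v k) = Phi d v (bb d v m)"
    and ne: "k \<noteq> m"
  let ?s = "\<lambda>i. bb d v k i - bb d v m i"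
  have "Phi d v ?s = (\<lambda>_. 0)" unfolding Phi_diff eq by simp
  then have s0: "?s k = ?s 0" by (rule Phi_zero_const[OF conv d4]) (use k in auto)
  have kk: "k < d - 2" using k d4 by auto
  note s0
  moreover have "?s k = 1" using kk bb_low[of k d v k] bb_low[of k d v m] k m ne d4 by simp
  moreover have "?s 0 = 0" using bb_low[of 0 d v k] bb_low[of 0 d v m] k m d4 by simp
  ultimately show False by simp
qed

lemma inT_zero_low:
  assumes conv: "convex_polygon d v" and d4: "d \<ge> 4" and r: "inT d v r"
    and low: "\<And>m. m < d - 2 \<Longrightarrow> r m = 0"
  shows "m < d \<Longrightarrow> r m = 0"
proof -
  assume m: "m < d"
  have D: "Del d v \<noteq> 0" by (rule Del_nz[OF conv d4])
  have a: "r (d-2) * e1 d v (d-2) + r (d-1) * e1 d v (d-1) = 0"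
    using r sum_lt_last2[of d "\<lambda>m. r m * e1 d v m"] low d4 by (simp add: inT_def)
  have b: "r (d-2) * e2 d v (d-2) + r (d-1) * e2 d v (d-1) = 0"
    using r sum_lt_last2[of d "\<lambda>m. r m * e2 d v m"] low d4 by (simp add: inT_def)
  have "r (d-2) * Del d v = (r (d-2) * e1 d v (d-2) + r (d-1) * e1 d v (d-1)) * e2 d v (d-1)
      - (r (d-2) * e2 d v (d-2) + r (d-1) * e2 d v (d-1)) * e1 d v (d-1)"
    by (simp add: Del_def algebra_simps)
  then have ra: "r (d-2) = 0" using a b D by simp
  have "r (d-1) * Del d v = (r (d-2) * e2 d v (d-2) + r (d-1) * e2 d v (d-1)) * e1 d v (d-2)
      - (r (d-2) * e1 d v (d-2) + r (d-1) * e1 d v (d-1)) * e2 d v (d-2)"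
    by (simp add: Del_def algebra_simps)
  then have rc: "r (d-1) = 0" using a b D by simp
  show ?thesis
  proof (cases "m < d - 2")
    case True then show ?thesis by (rule low)
  next
    case False then have "m = d - 2 \<or> m = d - 1" using m by auto
    then show ?thesis using ra rc by auto
  qed
qed

lemma decomp:
  assumes conv: "convex_polygon d v" and d4: "d \<ge> 4" and t: "inT d v t"
  shows "Phi d v t = (\<Sum>k\<in>{1..d-3}. fscale (t k - t 0) (Phi d v (bb d v k)))"
proof -
  let ?K = "{1..d-3}"
  define u where "u m = t m - t 0" for m
  define r where "r m = u m - (\<Sum>k\<in>?K. u k * bb d v k m)" for m
  have Tc: "inT d v (\<lambda>_. t 0)" by (rule inT_const) (use d4 in auto)
  have Tb: "inT d v (bb d v k)" if "k \<in> ?K" for k by (rule bb_inT[OF conv d4]) (use that in auto)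
  have "inT d v r"
  proof -
    have X: "(\<Sum>m<d. r m * g m) = (\<Sum>m<d. t m * g m) - t 0 * (\<Sum>m<d. g m)
       - (\<Sum>k\<in>?K. u k * (\<Sum>m<d. bb d v k m * g m))" for g
    proof -
      have "(\<Sum>m<d. r m * g m) = (\<Sum>m<d. t m * g m - t 0 * g m - (\<Sum>k\<in>?K. u k * (bb d v k m * g m)))"
        unfolding r_def u_def by (rule sum.cong) (simp_all add: sum_distrib_left sum_subtractf algebra_simps)
      also have "\<dots> = (\<Sum>m<d. t m * g m) - t 0 * (\<Sum>m<d. g m)
         - (\<Sum>m<d. \<Sum>k\<in>?K. u k * (bb d v k m * g m))"
        by (simp add: sum_subtractf sum_distrib_left)
      also have "(\<Sum>m<d. \<Sum>k\<in>?K. u k * (bb d v k m * g m)) = (\<Sum>k\<in>?K. \<Sum>m<d. u k * (bb d v k m * g m))"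
        by (rule sum.swap)
      finally show ?thesis by (simp add: sum_distrib_left)
    qed
    have "(\<Sum>m<d. e1 d v m) = 0" "(\<Sum>m<d. e2 d v m) = 0"
      using inT_const[of d v 1] d4 by (simp_all add: inT_def)
    moreover have "(\<Sum>k\<in>?K. u k * (\<Sum>m<d. bb d v k m * e1 d v m)) = 0"
      "(\<Sum>k\<in>?K. u k * (\<Sum>m<d. bb d v k m * e2 d v m)) = 0"
      using Tb by (auto simp: inT_def intro!: sum.neutral)
    ultimately show ?thesis using t unfolding inT_def X by simp
  qed
  moreover have "r m = 0" if "m < d - 2" for m
    unfolding r_def using that by (subst comb_low) (auto simp: u_def not_less_eq_eq)
  ultimately have r0: "r m = 0" if "m < d" for m using inT_zero_low[OF conv d4] that by blast
  have "Phi d v t = Phi d v u" unfolding u_def by (rule Phi_shift[symmetric])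
  also have "\<dots> = Phi d v (\<lambda>m. \<Sum>k\<in>?K. u k * bb d v k m)"
    by (rule Phi_cong) (use r0 in \<open>auto simp: r_def\<close>)
  also have "\<dots> = (\<Sum>k\<in>?K. fscale (u k) (Phi d v (bb d v k)))" by (rule Phi_lin)
  finally show ?thesis by (simp add: u_def)
qed

theorem lemma3p3:
  fixes d :: nat and v :: "nat \<Rightarrow> 'a::linordered_field \<times> 'a"
  assumes "d \<ge> 4"
    and "convex_polygon d v"
    and "no_three_edge_lines_concurrent d v"
  shows "vector_space.dim fscale (Dspace d \<inter> IC2 d v) = d - 3"
proof -
  interpret V: vector_space "fscale :: 'a \<Rightarrow> (nat \<times> nat \<Rightarrow> 'a) \<Rightarrow> _"
    by (rule vector_space_fscale)
  note d4 = assms(1) and conv = assms(2)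
  let ?K = "{1..d-3}"
  let ?f = "\<lambda>k. Phi d v (bb d v k)"
  let ?B = "?f ` ?K"
  have inj: "inj_on ?f ?K" by (rule inj_bb[OF conv d4])
  have PhiD: "Phi d v t \<in> Dspace d" for t by (simp add: Dspace_def Phi_def)
  show ?thesis
  proof (rule V.dim_unique)
    show "?B \<subseteq> Dspace d \<inter> IC2 d v"
    proof
      fix x assume "x \<in> ?B"
      then obtain k where k: "k \<in> ?K" and x: "x = ?f k" by blast
      have "inT d v (bb d v k)" by (rule bb_inT[OF conv d4]) (use k d4 in auto)
      then show "x \<in> Dspace d \<inter> IC2 d v" using PhiD Phi_IC2 x by blast
    qed
  next
    show "Dspace d \<inter> IC2 d v \<subseteq> V.span ?B"
    proof
      fix q assume "q \<in> Dspace d \<inter> IC2 d v"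
      then obtain t where t: "inT d v t" and q: "q = Phi d v t" using Phi_surj[OF conv] by blast
      have "q = (\<Sum>k\<in>?K. fscale (t k - t 0) (?f k))" unfolding q by (rule decomp[OF conv d4 t])
      also have "\<dots> \<in> V.span ?B"
        by (rule V.span_sum, rule V.span_scale, rule V.span_base) blast
      finally show "q \<in> V.span ?B" .
    qed
  next
    show "V.independent ?B"
    proof (rule V.independent_if_scalars_zero)
      show "finite ?B" by simp
    next
      fix g x assume z: "(\<Sum>x\<in>?B. fscale (g x) x) = 0" and x: "x \<in> ?B"
      have "(\<Sum>k\<in>?K. fscale (g (?f k)) (?f k)) = 0"
        using z unfolding sum.reindex[OF inj] by (simp add: o_def)
      then have "Phi d v (\<lambda>m. \<Sum>k\<in>?K. g (?f k) * bb d v k m) = (\<lambda>_. 0)"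
        by (simp add: Phi_lin zero_fun_def)
      moreover obtain k where k: "k \<in> ?K" and xk: "x = ?f k" using x by blast
      ultimately show "g x = 0" using indep_key[OF conv d4, of "\<lambda>k. g (?f k)" k] by simp
    qed
  next
    show "card ?B = d - 3" using card_image[OF inj] by simp
  qed
qed

end
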